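(* Let $q\ge 2$ be an integer, and let $\Gamma=(V,E)$ be a complete digraph on $\lceil 2q\ln q\rceil$ vertices with weights $w(e)\in\mathbb{Z}_q$ on its edges. Then $\Gamma$ contains a directed cycle $C$ whose total weight $\sum_{e\in C} w(e)$ is $0$ in $\mathbb{Z}_q$.
   Context: A complete digraph is a digraph in which every ordered pair $(u,v)$ of distinct vertices is joined by exactly one directed edge from $u$ to $v$ (so each pair of vertices is connected by one edge in each direction). Directed cycles may have length $2$. *)

theory Defs
  imports Complex_Main "HOL-Number_Theory.Cong"
begin

text \<open>In the complete digraph on vertex set V every ordered pair (u,v) of distinct
vertices is an edge.\<close>

definition dcycle_complete :: "'a set \<Rightarrow> 'a list \<Rightarrow> bool" where
  "dcycle_complete V vs \<longleftrightarrow> distinct vs \<and> length vs \<ge> 2 \<and> set vs \<subseteq> V"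

definition cycle_weight :: "('a \<Rightarrow> 'a \<Rightarrow> int) \<Rightarrow> 'a list \<Rightarrow> int" where
  "cycle_weight w vs = (\<Sum>i<length vs. w (vs ! i) (vs ! ((i + 1) mod length vs)))"

end

theory Submission
  imports Defs "HOL-Library.FuncSet"
begin


lemma ln_lower: "0 < (x::real) \<Longrightarrow> 1 - 1/x \<le> ln x"
proof -
  assume x: "0 < x"
  have "ln (1/x) \<le> 1/x - 1" using x by (intro ln_le_minus_one) simp
  then show ?thesis using x by (simp add: ln_div)
qed

lemma ln2_bound: "ln (2::real) \<ge> 7/12"
proof -
  have "ln (4/3 * (3/2::real)) = ln (4/3) + ln (3/2)" using ln_mult[of "4/3::real" "3/2"] by simp
  then have "ln (2::real) = ln (4/3) + ln (3/2)" by simp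
  moreover have "ln (4/3::real) \<ge> 1/4" using ln_lower[of "4/3"] by simp
  moreover have "ln (3/2::real) \<ge> 1/3" using ln_lower[of "3/2"] by simp
  ultimately show ?thesis by simp
qed

lemma ln3_bound: "ln (3::real) \<ge> 11/12"
proof -
  have "ln (2 * (3/2::real)) = ln 2 + ln (3/2)" using ln_mult[of "2::real" "3/2"] by simp
  then have "ln (3::real) = ln 2 + ln (3/2)" by simp
  moreover have "ln (3/2::real) \<ge> 1/3" using ln_lower[of "3/2"] by simp
  ultimately show ?thesis using ln2_bound by simp
qed

lemma mono_step:
  fixes m N0 N :: nat
  assumes "(N0+1)*m^N0 < (Suc m)^N0" "Suc m \<le> N0+2" "N0 \<le> N"
  shows "(N+1)*m^N < (Suc m)^N"
  using assms(3)
proof (induction N rule: dec_induct)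
  case base then show ?case using assms(1) by simp
next
  case (step N)
  have "(Suc N+1)*m^(Suc N) = (m*(N+2))*m^N" by (simp add: algebra_simps)
  also have "\<dots> \<le> (Suc m*(N+1))*m^N"
  proof -
    have "m*(N+2) \<le> Suc m*(N+1)" using assms(2) step(1) by (simp add: algebra_simps)
    then show ?thesis by (rule mult_right_mono) simp
  qed
  also have "\<dots> = Suc m * ((N+1)*m^N)" by (simp only: mult.assoc)
  also have "\<dots> < Suc m * (Suc m)^N" using step(3) by (rule mult_strict_left_mono) simp
  finally show ?case by simp
qed

lemma mono_step':
  fixes q N0 N :: nat
  assumes "(N0+1)*(q-1)^N0 < q^N0" "q \<le> N0+2" "N0 \<le> N" "q \<ge> 1"
  shows "(N+1)*(q-1)^N < q^N"
  using mono_step[of N0 "q-1" N] assms by simp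

lemma real_part:
  fixes q N :: nat
  assumes q: "q \<ge> 5" and N: "real N \<ge> 2 * real q * ln (real q) - 1"
  shows "real (N+1) < (real q / (real q - 1))^N"
proof -
  define t where "t = real N / real q"
  have qpos: "real q > 1" using q by simp
  have t0: "t \<ge> 0" unfolding t_def by simp
  have l1: "ln (real q / (real q - 1)) \<ge> 1 / real q"
    using ln_lower[of "real q / (real q - 1)"] qpos by (simp add: field_simps)
  have "(real q / (real q - 1))^N = exp (real N * ln (real q / (real q - 1)))"
    using qpos by (simp add: ln_realpow[symmetric])
  also have "\<dots> \<ge> exp t" unfolding t_def
    using l1 mult_left_mono[OF l1, of "real N"] by (simp add: field_simps)
  finally have A: "(real q / (real q - 1))^N \<ge> exp t" .
  have B: "exp (t/2) \<ge> real q - 1/2"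
  proof -
    have "real N / real q \<ge> (2 * real q * ln (real q) - 1) / real q"
      using N qpos by (simp add: divide_right_mono)
    then have "t/2 \<ge> ln (real q) - 1/(2*real q)" unfolding t_def using qpos
      by (simp add: field_simps)
    then have "exp (t/2) \<ge> exp (ln (real q) + (- 1/(2*real q)))" by simp
    also have "exp (ln (real q) + (- 1/(2*real q))) = real q * exp (- 1/(2*real q))"
      using qpos by (simp only: exp_add exp_ln_iff) simp
    finally have "exp (t/2) \<ge> real q * exp (- 1/(2*real q))" .
    moreover have "exp (- 1/(2*real q)) \<ge> 1 - 1/(2*real q)"
      using exp_ge_add_one_self[of "- 1/(2*real q)"] by simp
    ultimately have "exp (t/2) \<ge> real q * (1 - 1/(2*real q))"
      by (smt (verit) mult_left_mono qpos)
    moreover have "real q * (1 - 1/(2*real q)) = real q - 1/2" using qpos by (simp add: field_simps)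
    ultimately show ?thesis by linarith
  qed
  have C: "exp (t/2) \<ge> 1 + t/2 + (t/2)^2/2"
    using exp_lower_Taylor_quadratic[of "t/2"] t0 by simp
  have "exp t \<ge> (real q - 1/2) * (1 + t/2 + (t/2)^2/2)"
  proof -
    have "(real q - 1/2) * (1 + t/2 + (t/2)^2/2) \<le> exp (t/2) * exp (t/2)"
      by (rule mult_mono) (use B C t0 in auto)
    then show ?thesis by (simp add: exp_add[symmetric])
  qed
  moreover have "(real q - 1/2) * (1 + t/2 + (t/2)^2/2) > real q * t + 1"
  proof -
    have "(real q - 1/2) * (1 + t/2 + (t/2)^2/2) - (real q * t + 1)
        = (7/2 - 11/4 * t + 9/16 * t^2) + (real q - 5) * ((t-2)^2 + 4)/8"
      by (simp add: field_simps power2_eq_square)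
    moreover have "7/2 - 11/4 * t + 9/16 * t^2 > 0"
    proof -
      have "7/2 - 11/4 * t + 9/16 * t^2 = 9/16 * (t - 22/9)^2 + 5/36"
        by (simp add: algebra_simps power2_eq_square)
      moreover have "9/16 * (t - 22/9)^2 \<ge> 0" by simp
      ultimately show ?thesis by linarith
    qed
    moreover have "(real q - 5) * ((t-2)^2 + 4)/8 \<ge> 0" using q by simp
    ultimately show ?thesis by linarith
  qed
  moreover have "real q * t + 1 = real (N+1)" unfolding t_def using qpos by simp
  ultimately show ?thesis using A by linarith
qed



lemma key_ineq:
  fixes q n :: nat
  assumes q: "q \<ge> 2" and n: "n = nat \<lceil>2 * real q * ln (real q)\<rceil>"
  shows "n \<ge> 1 \<and> n * (q-1)^(n-1) < q^(n-1)"
proof -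
  have lnq: "ln (real q) > 0" using q by simp
  have nge: "real n \<ge> 2 * real q * ln (real q)" unfolding n by (rule real_nat_ceiling_ge)
  have "0 < 2 * real q * ln (real q)" using lnq q by simp
  then have "0 < \<lceil>2 * real q * ln (real q)\<rceil>" by simp
  then have n1: "n \<ge> 1" unfolding n by linarith
  have nlow: "n \<ge> k" if "real k - 1 < 2 * real q * ln (real q)" for k
  proof -
    have "int k - 1 < \<lceil>2 * real q * ln (real q)\<rceil>"
      using that by (simp add: less_ceiling_iff)
    then show ?thesis unfolding n by linarith
  qed
  consider "q = 2" | "q = 3" | "q = 4" | "q \<ge> 5" using q by linarith
  then have "n * (q-1)^(n-1) < q^(n-1)"
  proof cases
    case 1
    have "real 3 - 1 < 2 * real q * ln (real q)" using 1 ln2_bound by simp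
    then have "n \<ge> 3" by (rule nlow)
    then have "(n-1+1)*(2-1)^(n-1) < 2^(n-1)"
      using mono_step'[of 2 2 "n-1"] by simp
    then show ?thesis using 1 n1 by simp
  next
    case 2
    have "real 6 - 1 < 2 * real q * ln (real q)" using 2 ln3_bound by simp
    then have "n \<ge> 6" by (rule nlow)
    then have "(n-1+1)*(3-1)^(n-1) < 3^(n-1)"
      using mono_step'[of 5 3 "n-1"] by simp
    then show ?thesis using 2 n1 by simp
  next
    case 3
    have "ln (real 4) = 2 * ln 2" using ln_mult[of "2::real" 2] by simp
    then have "real 10 - 1 < 2 * real q * ln (real q)" using 3 ln2_bound by simp
    then have "n \<ge> 10" by (rule nlow)
    then have "(n-1+1)*(4-1)^(n-1) < 4^(n-1)"
      using mono_step'[of 9 4 "n-1"] by simp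
    then show ?thesis using 3 n1 by simp
  next
    case 4
    define N where "N = n - 1"
    have "real N \<ge> 2 * real q * ln (real q) - 1" unfolding N_def using n1 nge by simp
    from real_part[OF 4 this] have A: "real (N+1) < (real q / (real q - 1))^N" .
    have qp: "real q - 1 > 0" using q by simp
    have "real (N+1) * (real q - 1)^N < (real q / (real q - 1))^N * (real q - 1)^N"
      using A qp by (intro mult_strict_right_mono) auto
    also have "\<dots> = real q ^ N" using qp by (simp add: power_divide)
    finally have "real ((N+1) * (q-1)^N) < real (q^N)" using q by (simp add: of_nat_diff algebra_simps)
    then show ?thesis unfolding N_def using n1 by (simp only: of_nat_less_iff) simp
  qed
  with n1 show ?thesis by simp
qed



lemma good_labeling:
  fixes V :: "'a set" and w :: "'a \<Rightarrow> 'a \<Rightarrow> int" and q :: nat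
  assumes finV: "finite V" and q: "q \<ge> 2"
    and ineq: "card V * q * (q-1)^(card V - 1) < q^(card V)"
  shows "\<exists>f. \<forall>v\<in>V. \<exists>u\<in>V. u \<noteq> v \<and> f u = (f v + w v u) mod int q"
proof -
  define Q where "Q = {0..<int q}"
  have cardQ: "card Q = q" unfolding Q_def by simp
  have finQ: "finite Q" unfolding Q_def by simp
  define F where "F = PiE V (\<lambda>_. Q)"
  have cardF: "card F = q ^ card V" unfolding F_def using finV by (simp add: card_PiE cardQ)
  have finF: "finite F" unfolding F_def using finV finQ by (simp add: finite_PiE)
  define Bad where "Bad v = {f \<in> F. \<forall>u\<in>V. u \<noteq> v \<longrightarrow> f u \<noteq> (f v + w v u) mod int q}" for v
  define B where "B v c = PiE V (\<lambda>u. if u = v then {c} else Q - {(c + w v u) mod int q})" for v c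
  have modQ: "x mod int q \<in> Q" for x unfolding Q_def using q by simp
  have cardB: "card (B v c) = (q-1)^(card V - 1)" if v: "v \<in> V" for v c
  proof -
    have "card (B v c) = (\<Prod>u\<in>V. card (if u = v then {c} else Q - {(c + w v u) mod int q}))"
      unfolding B_def using finV by (simp add: card_PiE)
    also have "\<dots> = card (if v = v then {c} else Q - {(c + w v v) mod int q}) *
        (\<Prod>u\<in>V-{v}. card (if u = v then {c} else Q - {(c + w v u) mod int q}))"
      using finV v by (simp add: prod.remove)
    also have "(\<Prod>u\<in>V-{v}. card (if u = v then {c} else Q - {(c + w v u) mod int q}))
        = (\<Prod>u\<in>V-{v}. q - 1)"
      by (rule prod.cong) (use modQ finQ cardQ in \<open>auto simp: card_Diff_singleton\<close>)
    finally show ?thesis using finV v by (simp add: card_Diff_singleton)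
  qed
  have finB: "finite (B v c)" for v c unfolding B_def using finV finQ by (intro finite_PiE) auto
  have BadB: "Bad v \<subseteq> (\<Union>c\<in>Q. B v c)" if "v \<in> V" for v
  proof
    fix f assume f: "f \<in> Bad v"
    then have fF: "f \<in> F" unfolding Bad_def by simp
    then have "f v \<in> Q" unfolding F_def using that by auto
    moreover have "f \<in> B v (f v)" unfolding B_def using f fF unfolding Bad_def F_def
      by (auto simp: PiE_iff)
    ultimately show "f \<in> (\<Union>c\<in>Q. B v c)" by blast
  qed
  have cardBad: "card (Bad v) \<le> q * (q-1)^(card V - 1)" if "v \<in> V" for v
  proof -
    have "card (Bad v) \<le> card (\<Union>c\<in>Q. B v c)"
      by (rule card_mono) (use BadB[OF that] finQ finB in auto)
    also have "\<dots> \<le> (\<Sum>c\<in>Q. card (B v c))" by (rule card_UN_le) (rule finQ)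
    also have "\<dots> = q * (q-1)^(card V - 1)" using cardB[OF that] cardQ by simp
    finally show ?thesis .
  qed
  have "card (\<Union>v\<in>V. Bad v) \<le> (\<Sum>v\<in>V. card (Bad v))" by (rule card_UN_le) (rule finV)
  also have "\<dots> \<le> (\<Sum>v\<in>V. q * (q-1)^(card V - 1))" by (rule sum_mono) (rule cardBad)
  also have "\<dots> = card V * q * (q-1)^(card V - 1)" by simp
  also have "\<dots> < card F" using ineq cardF by simp
  finally have lt: "card (\<Union>v\<in>V. Bad v) < card F" .
  have sub: "(\<Union>v\<in>V. Bad v) \<subseteq> F" by (auto simp: Bad_def)
  have "\<not> F \<subseteq> (\<Union>v\<in>V. Bad v)"
  proof
    assume "F \<subseteq> (\<Union>v\<in>V. Bad v)"
    with sub have "(\<Union>v\<in>V. Bad v) = F" by blast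
    with lt show False by simp
  qed
  then obtain f where fF: "f \<in> F" and nb: "\<forall>v\<in>V. f \<notin> Bad v" by blast
  show ?thesis
  proof (intro exI ballI)
    fix v assume "v \<in> V"
    with nb fF show "\<exists>u\<in>V. u \<noteq> v \<and> f u = (f v + w v u) mod int q"
      unfolding Bad_def by auto
  qed
qed



lemma cycle_from_g:
  fixes V :: "'a set" and w :: "'a \<Rightarrow> 'a \<Rightarrow> int" and f :: "'a \<Rightarrow> int" and q :: nat
  assumes finV: "finite V" and v0: "v0 \<in> V"
    and g: "\<And>v. v \<in> V \<Longrightarrow> g v \<in> V \<and> g v \<noteq> v \<and> [w v (g v) = f (g v) - f v] (mod int q)"
  shows "\<exists>vs. dcycle_complete V vs \<and> [cycle_weight w vs = 0] (mod int q)"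
proof -
  define s where "s k = (g ^^ k) v0" for k
  have sSuc: "s (Suc k) = g (s k)" for k unfolding s_def by simp
  have sV: "s k \<in> V" for k by (induction k) (use v0 g in \<open>auto simp: sSuc s_def\<close>)
  have "\<not> inj_on s {0..card V}"
  proof
    assume "inj_on s {0..card V}"
    then have "card (s ` {0..card V}) = card V + 1" by (simp add: card_image)
    moreover have "card (s ` {0..card V}) \<le> card V"
      by (rule card_mono) (use finV sV in auto)
    ultimately show False by simp
  qed
  then obtain a b where "a \<noteq> b" "s a = s b" unfolding inj_on_def by blast
  then have Pex: "\<exists>j. \<exists>i<j. s i = s j"
    by (metis linorder_neqE_nat)
  define j0 where "j0 = (LEAST j. \<exists>i<j. s i = s j)"
  have "\<exists>i<j0. s i = s j0" unfolding j0_def using Pex by (rule LeastI_ex)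
  then obtain i0 where i0: "i0 < j0" "s i0 = s j0" by blast
  have minim: "s a \<noteq> s b" if "a < b" "b < j0" for a b
  proof
    assume "s a = s b"
    then have "\<exists>i<b. s i = s b" using that by blast
    then have "j0 \<le> b" unfolding j0_def by (rule Least_le)
    with that show False by simp
  qed
  define L where "L = j0 - i0"
  define vs where "vs = map (\<lambda>k. s (i0 + k)) [0..<L]"
  have lenvs: "length vs = L" unfolding vs_def by simp
  have nthvs: "vs ! k = s (i0 + k)" if "k < L" for k unfolding vs_def using that by simp
  have dist: "distinct vs"
    unfolding vs_def distinct_map
  proof
    show "inj_on (\<lambda>k. s (i0 + k)) (set [0..<L])"
    proof (rule inj_onI)
      fix a b assume ab: "a \<in> set [0..<L]" "b \<in> set [0..<L]" "s (i0 + a) = s (i0 + b)"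
      from ab have aL: "i0 + a < j0" "i0 + b < j0" unfolding L_def by auto
      show "a = b"
      proof (rule ccontr)
        assume "a \<noteq> b"
        then consider "a < b" | "b < a" by linarith
        then show False
        proof cases
          case 1 then show False using minim[of "i0+a" "i0+b"] ab(3) aL by simp
        next
          case 2 then show False using minim[of "i0+b" "i0+a"] ab(3) aL by simp
        qed
      qed
    qed
  qed simp
  have L2: "L \<ge> 2"
  proof -
    have "L \<noteq> 0" unfolding L_def using i0 by simp
    moreover have "L \<noteq> 1"
    proof
      assume "L = 1"
      then have "j0 = Suc i0" unfolding L_def using i0 by simp
      then have "s j0 = g (s i0)" by (simp add: sSuc)
      then show False using g[OF sV[of i0]] i0 by simp
    qed
    ultimately show ?thesis by linarith
  qed
  have dc: "dcycle_complete V vs"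
    unfolding dcycle_complete_def using dist L2 lenvs sV by (auto simp: vs_def)
  have next_eq: "vs ! ((k + 1) mod L) = s (i0 + Suc k)" if "k < L" for k
  proof (cases "k + 1 < L")
    case True then show ?thesis using nthvs by simp
  next
    case False
    then have "k + 1 = L" using that by simp
    then have "(k+1) mod L = 0" by simp
    moreover have "s (i0 + Suc k) = s i0" using \<open>k+1 = L\<close> i0 unfolding L_def by simp
    ultimately show ?thesis using nthvs L2 by simp
  qed
  have cw: "cycle_weight w vs = (\<Sum>k<L. w (s (i0 + k)) (s (i0 + Suc k)))"
    unfolding cycle_weight_def lenvs
  proof (rule sum.cong[OF refl])
    fix k assume "k \<in> {..<L}"
    then have k: "k < L" by simp
    show "w (vs ! k) (vs ! ((k + 1) mod L)) = w (s (i0 + k)) (s (i0 + Suc k))"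
      by (simp only: next_eq[OF k] nthvs[OF k])
  qed
  have "[(\<Sum>k<L. w (s (i0 + k)) (s (i0 + Suc k))) = (\<Sum>k<L. f (s (i0 + Suc k)) - f (s (i0 + k)))] (mod int q)"
  proof (rule cong_sum)
    fix k assume "k \<in> {..<L}"
    show "[w (s (i0 + k)) (s (i0 + Suc k)) = f (s (i0 + Suc k)) - f (s (i0 + k))] (mod int q)"
      using g[OF sV[of "i0+k"]] by (simp add: sSuc)
  qed
  also have "(\<Sum>k<L. f (s (i0 + Suc k)) - f (s (i0 + k))) = f (s (i0 + L)) - f (s (i0 + 0))"
    using sum_lessThan_telescope[of "\<lambda>k. f (s (i0 + k))" L] by simp
  also have "\<dots> = 0" using i0 unfolding L_def by simp
  finally show ?thesis using dc cw by auto
qed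

theorem lemma4:
  fixes q :: nat and V :: "'a set" and w :: "'a \<Rightarrow> 'a \<Rightarrow> int"
  assumes "q \<ge> 2"
    and "finite V"
    and "card V = nat \<lceil>2 * real q * ln (real q)\<rceil>"
  shows "\<exists>vs. dcycle_complete V vs \<and> [cycle_weight w vs = 0] (mod int q)"
proof -
  from key_ineq[OF assms(1) assms(3)] have n1: "card V \<ge> 1"
    and ki: "card V * (q-1)^(card V - 1) < q^(card V - 1)" by auto
  have "card V * q * (q-1)^(card V - 1) = q * (card V * (q-1)^(card V - 1))" by simp
  also have "\<dots> < q * q^(card V - 1)" using ki assms(1) by simp
  also have "\<dots> = q ^ card V" using n1 by (simp add: power_eq_if)
  finally have ineq: "card V * q * (q-1)^(card V - 1) < q ^ card V" .
  obtain f where f: "\<forall>v\<in>V. \<exists>u\<in>V. u \<noteq> v \<and> f u = (f v + w v u) mod int q"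
    using good_labeling[OF assms(2) assms(1) ineq] by blast
  define g where "g v = (SOME u. u \<in> V \<and> u \<noteq> v \<and> f u = (f v + w v u) mod int q)" for v
  have g: "g v \<in> V \<and> g v \<noteq> v \<and> [w v (g v) = f (g v) - f v] (mod int q)" if "v \<in> V" for v
  proof -
    have "\<exists>u. u \<in> V \<and> u \<noteq> v \<and> f u = (f v + w v u) mod int q" using f that by blast
    then have "g v \<in> V \<and> g v \<noteq> v \<and> f (g v) = (f v + w v (g v)) mod int q"
      unfolding g_def by (rule someI_ex)
    then show ?thesis unfolding cong_def by (simp add: mod_diff_left_eq)
  qed
  have "V \<noteq> {}" using n1 by auto
  then obtain v0 where "v0 \<in> V" by blast
  show ?thesis by (rule cycle_from_g[where g=g and f=f and w=w and q=q, OF assms(2) \<open>v0 \<in> V\<close> g]) 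
qed


end
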